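(* The Petersen graph is uniformly vertex-transitive but is not a Cayley graph.
   Context: The Petersen graph has as vertices the $2$-element subsets of $\{1,2,3,4,5\}$, two being adjacent iff they are disjoint. A permutation $\sigma$ of $V(\Gamma)$ is identified with its permutation matrix (the $(u,v)$ entry is $1$ iff $\sigma(u)=v$); $J_n$ is the $n\times n$ all-ones matrix. A graph $\Gamma$ on $n$ vertices is uniformly vertex-transitive if there is a set of $n$ distinct automorphisms $\{\sigma_1,\ldots,\sigma_n\}\subset\operatorname{Aut}(\Gamma)$ with $\sum_i\sigma_i=J_n$. A Cayley graph $C(G,S)$, for a finite group $G$ and subset $S\subset G$, has vertex set $G$, with $a,b$ adjacent iff $a=sb$ or $b=sa$ for some $s\in S$; a graph is Cayley if it is isomorphic to some $C(G,S)$. *)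

theory Defs
  imports "HOL-Algebra.Group" "HOL-Combinatorics.Permutations"
begin

definition petersen_V :: "nat set set" where
  "petersen_V = {A. A \<subseteq> {1..5} \<and> card A = 2}"

definition petersen_adj :: "nat set \<Rightarrow> nat set \<Rightarrow> bool" where
  "petersen_adj A B \<longleftrightarrow> A \<inter> B = {}"

definition is_automorphism :: "'a set \<Rightarrow> ('a \<Rightarrow> 'a \<Rightarrow> bool) \<Rightarrow> ('a \<Rightarrow> 'a) \<Rightarrow> bool" where
  "is_automorphism V adj \<sigma> \<longleftrightarrow>
     \<sigma> permutes V \<and> (\<forall>u\<in>V. \<forall>v\<in>V. adj u v \<longleftrightarrow> adj (\<sigma> u) (\<sigma> v))"

definition perm_matrix :: "('a \<Rightarrow> 'a) \<Rightarrow> 'a \<Rightarrow> 'a \<Rightarrow> int" where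
  "perm_matrix \<sigma> u v = (if \<sigma> u = v then 1 else 0)"

definition uniformly_vertex_transitive :: "'a set \<Rightarrow> ('a \<Rightarrow> 'a \<Rightarrow> bool) \<Rightarrow> bool" where
  "uniformly_vertex_transitive V adj \<longleftrightarrow>
     (\<exists>\<Sigma>. (\<forall>\<sigma>\<in>\<Sigma>. is_automorphism V adj \<sigma>) \<and> card \<Sigma> = card V \<and>
          (\<forall>u\<in>V. \<forall>v\<in>V. (\<Sum>\<sigma>\<in>\<Sigma>. perm_matrix \<sigma> u v) = 1))"

definition cayley_adj :: "('g, 'b) monoid_scheme \<Rightarrow> 'g set \<Rightarrow> 'g \<Rightarrow> 'g \<Rightarrow> bool" where
  "cayley_adj G S a b \<longleftrightarrow> (\<exists>s\<in>S. a = s \<otimes>\<^bsub>G\<^esub> b \<or> b = s \<otimes>\<^bsub>G\<^esub> a)"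

definition graph_iso :: "'a set \<Rightarrow> ('a \<Rightarrow> 'a \<Rightarrow> bool) \<Rightarrow> 'b set \<Rightarrow> ('b \<Rightarrow> 'b \<Rightarrow> bool) \<Rightarrow> bool" where
  "graph_iso V adj W adj' \<longleftrightarrow>
     (\<exists>f. bij_betw f V W \<and> (\<forall>u\<in>V. \<forall>v\<in>V. adj u v \<longleftrightarrow> adj' (f u) (f v)))"

end

theory Submission
  imports Defs
begin


definition rot :: "nat \<Rightarrow> nat \<Rightarrow> nat" where
  "rot k x = (if x \<in> {1..5} then (x + k - 1) mod 5 + 1 else x)"
definition dbl :: "nat \<Rightarrow> nat" where
  "dbl x = (if x \<in> {1..5} then (2*x - 2) mod 5 + 1 else x)"

definition sig :: "(nat \<Rightarrow> nat) \<Rightarrow> nat set \<Rightarrow> nat set" where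
  "sig p A = (if A \<in> petersen_V then p ` A else A)"

definition PL :: "(nat \<Rightarrow> nat) list" where
  "PL = [rot 0, rot 1, rot 2, rot 3, rot 4, rot 0 \<circ> dbl, rot 1 \<circ> dbl, rot 2 \<circ> dbl,
         rot 3 \<circ> dbl, rot 4 \<circ> dbl]"

lemma perm_from_image:
  assumes "f ` {1..5::nat} = {1..5}" "\<And>x. x \<notin> {1..5} \<Longrightarrow> f x = x"
  shows "f permutes {1..5}"
proof (rule bij_imp_permutes)
  show "bij_betw f {1..5} {1..5}"
    using assms(1) by (simp add: bij_betw_def eq_card_imp_inj_on)
qed (use assms in auto)

lemma five: "{1..5::nat} = {1,2,3,4,5}" by auto

lemma rot_perm: "k < 5 \<Longrightarrow> rot k permutes {1..5}"
proof (rule perm_from_image)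
  assume "k < 5"
  then have "k = 0 \<or> k = 1 \<or> k = 2 \<or> k = 3 \<or> k = 4" by linarith
  then show "rot k ` {1..5} = {1..5}"
    unfolding five by (elim disjE) (simp_all add: rot_def, auto)
qed (auto simp: rot_def)

lemma dbl_perm: "dbl permutes {1..5}"
proof (rule perm_from_image)
  show "dbl ` {1..5} = {1..5}"
    unfolding five by (simp add: dbl_def, auto)
qed (auto simp: dbl_def)

lemma PL_perm: "\<forall>p\<in>set PL. p permutes {1..5}"
proof -
  have r: "rot 0 permutes {1..5}" "rot 1 permutes {1..5}" "rot 2 permutes {1..5}"
     "rot 3 permutes {1..5}" "rot 4 permutes {1..5}"
    by (rule rot_perm; simp)+
  show ?thesis unfolding PL_def
    by (simp only: list.set ball_simps) (blast intro: r dbl_perm permutes_compose)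
qed

lemma V_card: "A \<in> petersen_V \<Longrightarrow> p permutes {1..5} \<Longrightarrow> p ` A \<in> petersen_V"
  unfolding petersen_V_def
  by (auto simp: permutes_image card_image inj_on_subset[OF permutes_inj_on] image_mono
      dest: permutes_image intro: image_mono)
 
lemma sig_aut: assumes p: "p permutes {1..5}" shows "is_automorphism petersen_V petersen_adj (sig p)"
  unfolding is_automorphism_def
proof
  have ip: "inv_into UNIV p permutes {1..5}" using p by (rule permutes_inv)
  have inj: "inj p" using p by (rule permutes_inj)
  show "sig p permutes petersen_V"
  proof (rule bij_imp_permutes)
    show "bij_betw (sig p) petersen_V petersen_V"
    proof (rule bij_betwI[where g = "sig (inv_into UNIV p)"])
      show "sig p \<in> petersen_V \<rightarrow> petersen_V" using V_card[OF _ p] by (auto simp: sig_def)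
      show "sig (inv_into UNIV p) \<in> petersen_V \<rightarrow> petersen_V" using V_card[OF _ ip] by (auto simp: sig_def)
      fix x assume "x \<in> petersen_V"
      then show "sig (inv_into UNIV p) (sig p x) = x" using V_card[OF _ p] inj
        by (simp add: sig_def image_image inv_f_f)
    next
      fix y assume "y \<in> petersen_V"
      then show "sig p (sig (inv_into UNIV p) y) = y" using V_card[OF _ ip] permutes_surj[OF p]
        by (simp add: sig_def image_image surj_f_inv_f)
    qed
  qed (simp add: sig_def)
  show "\<forall>u\<in>petersen_V. \<forall>v\<in>petersen_V. petersen_adj u v = petersen_adj (sig p u) (sig p v)"
    by (auto simp: sig_def petersen_adj_def image_Int[OF inj, symmetric])
qed

lemma pairV: "a \<noteq> b \<Longrightarrow> a \<in> {1..5} \<Longrightarrow> b \<in> {1..5} \<Longrightarrow> {a,b} \<in> petersen_V"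
  unfolding petersen_V_def by auto

lemma V_sub: "{{1,2},{1,3},{1,4},{1,5},{2,3},{2,4},{2,5},{3,4},{3,5},{4,5}} \<subseteq> petersen_V"
  by (intro insert_subsetI empty_subsetI pairV; simp)

lemma V_explicit: "petersen_V = {{1,2},{1,3},{1,4},{1,5},{2,3},{2,4},{2,5},{3,4},{3,5},{4,5}}"
proof -
  have "A \<in> {{1,2},{1,3},{1,4},{1,5},{2,3},{2,4},{2,5},{3,4},{3,5},{4,5}}"
    if "A \<in> petersen_V" for A :: "nat set"
  proof -
    from that have s: "A \<subseteq> {1..5}" and c: "card A = 2" by (simp_all add: petersen_V_def)
    from c obtain x y where A: "A = {x,y}" "x \<noteq> y" unfolding card_2_iff by blast
    with s have "x \<in> {1..5}" "y \<in> {1..5}" by auto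
    then have "x = 1 \<or> x = 2 \<or> x = 3 \<or> x = 4 \<or> x = 5" "y = 1 \<or> y = 2 \<or> y = 3 \<or> y = 4 \<or> y = 5" by auto
    with A show ?thesis
      by (elim disjE; simp only: insert_iff doubleton_eq_iff; simp)
  qed
  then show ?thesis by (intro subset_antisym subsetI V_sub)
qed

lemma card_V: "card petersen_V = 10"
proof -
  have "card petersen_V = card {1..5::nat} choose 2"
    unfolding petersen_V_def by (rule n_subsets) simp
  then show ?thesis by (simp add: numeral_eq_Suc)
qed

lemma finite_V: "finite petersen_V"
  unfolding V_explicit by simp

lemma PL_distinct_all: "\<forall>u\<in>{{1,2},{1,3},{1,4},{1,5},{2,3},{2,4},{2,5},{3,4},{3,5},{4,5}}. distinct (map (\<lambda>p. p ` u) PL)"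
  by (simp add: PL_def rot_def dbl_def doubleton_eq_iff)

lemma PL_len: "length PL = 10" by (simp add: PL_def)

lemma count_one:
  assumes "distinct xs" "v \<in> set xs"
  shows "sum_list (map (\<lambda>z. if z = v then 1 else 0::int) xs) = 1"
  using assms by (simp add: sum_list_distinct_conv_sum_set)

lemma part1: "uniformly_vertex_transitive petersen_V petersen_adj"
proof -
  have distu: "distinct (map (\<lambda>p. p ` u) PL)" if "u \<in> petersen_V" for u
    by (rule PL_distinct_all[rule_format, OF that[unfolded V_explicit]])
  have "{1,2} \<in> petersen_V" by (rule pairV) auto
  from distu[OF this] have dPL: "distinct PL" and injPL: "inj_on (\<lambda>p. p ` {1,2}) (set PL)"
    by (simp_all add: distinct_map)
  have sigu: "sig p u = p ` u" if "u \<in> petersen_V" for p u using that by (simp add: sig_def)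
  have injsig: "inj_on sig (set PL)"
  proof (rule inj_onI)
    fix p q assume "p \<in> set PL" "q \<in> set PL" "sig p = sig q"
    then show "p = q" using injPL sigu[OF \<open>{1,2} \<in> petersen_V\<close>]
      by (metis inj_onD)
  qed
  show ?thesis unfolding uniformly_vertex_transitive_def
  proof (intro exI[of _ "sig ` set PL"] conjI ballI)
    fix \<sigma> assume "\<sigma> \<in> sig ` set PL"
    then show "is_automorphism petersen_V petersen_adj \<sigma>" using PL_perm sig_aut by blast
  next
    show "card (sig ` set PL) = card petersen_V"
      using card_image[OF injsig] distinct_card[OF dPL] PL_len card_V by simp
  next
    fix u v assume u: "u \<in> petersen_V" and v: "v \<in> petersen_V"
    define L where "L = map (\<lambda>p. p ` u) PL"
    have dL: "distinct L" using distu[OF u] by (simp add: L_def)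
    have "set L \<subseteq> petersen_V" using PL_perm V_card[OF u] by (auto simp: L_def)
    moreover have "card (set L) = card petersen_V"
      using distinct_card[OF dL] PL_len card_V by (simp add: L_def)
    ultimately have "set L = petersen_V" using finite_V by (simp add: card_subset_eq)
    with v have vL: "v \<in> set L" by simp
    have "(\<Sum>\<sigma>\<in>sig ` set PL. perm_matrix \<sigma> u v) = (\<Sum>p\<in>set PL. perm_matrix (sig p) u v)"
      by (simp add: sum.reindex[OF injsig])
    also have "\<dots> = sum_list (map (\<lambda>p. perm_matrix (sig p) u v) PL)"
      by (simp add: sum_list_distinct_conv_sum_set[OF dPL])
    also have "\<dots> = sum_list (map (\<lambda>z. if z = v then 1 else 0) L)"
      by (simp add: L_def perm_matrix_def sigu[OF u] comp_def)
    also have "\<dots> = 1" by (rule count_one[OF dL vL])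
    finally show "(\<Sum>\<sigma>\<in>sig ` set PL. perm_matrix \<sigma> u v) = 1" .
  qed
qed



lemma V_mem: "u \<in> petersen_V \<longleftrightarrow> u \<subseteq> {1..5} \<and> card u = 2"
  by (simp add: petersen_V_def)

lemma P1: "u \<in> petersen_V \<Longrightarrow> \<not> petersen_adj u u"
  by (auto simp: petersen_adj_def V_mem)

lemma union_ge3:
  assumes "a \<in> petersen_V" "c \<in> petersen_V" "a \<noteq> c"
  shows "card (a \<union> c) \<ge> 3"
proof (rule ccontr)
  assume "\<not> 3 \<le> card (a \<union> c)"
  then have le: "card (a \<union> c) \<le> 2" by simp
  have fin: "finite (a \<union> c)" using assms by (auto simp: V_mem intro: finite_subset)
  have "a = a \<union> c" using card_seteq[OF fin _ ] le assms by (simp add: V_mem)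
  moreover have "c = a \<union> c" using card_seteq[OF fin _ ] le assms by (simp add: V_mem)
  ultimately show False using assms by simp
qed

lemma compl_card:
  assumes "a \<in> petersen_V" "c \<in> petersen_V"
  shows "card ({1..5::nat} - (a \<union> c)) = 5 - card (a \<union> c)"
  using assms by (subst card_Diff_subset) (auto simp: V_mem intro: finite_subset)

lemma P4:
  assumes "a \<in> petersen_V" "b \<in> petersen_V" "c \<in> petersen_V" "d \<in> petersen_V" "a \<noteq> c"
    "petersen_adj a b" "petersen_adj b c" "petersen_adj c d" "petersen_adj d a"
  shows "b = d"
proof -
  define X where "X = {1..5::nat} - (a \<union> c)"
  have cX: "card X \<le> 2" using union_ge3[OF assms(1,3,5)] compl_card[OF assms(1,3)] X_def by simp
  have fX: "finite X" by (simp add: X_def)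
  have "b \<subseteq> X" using assms by (auto simp: X_def V_mem petersen_adj_def)
  then have "b = X" using card_seteq[OF fX] cX assms(2) by (simp add: V_mem)
  moreover have "d \<subseteq> X" using assms by (auto simp: X_def V_mem petersen_adj_def)
  then have "d = X" using card_seteq[OF fX] cX assms(4) by (simp add: V_mem)
  ultimately show ?thesis by simp
qed

lemma P2:
  assumes "u \<in> petersen_V" "w \<in> petersen_V" "u \<noteq> w" "\<not> petersen_adj u w"
  shows "\<exists>c\<in>petersen_V. petersen_adj u c \<and> petersen_adj c w"
proof -
  define X where "X = {1..5::nat} - (u \<union> w)"
  have fu: "finite u" "finite w" using assms by (auto simp: V_mem intro: finite_subset)
  have "card (u \<inter> w) \<ge> 1" using assms fu by (auto simp: petersen_adj_def card_gt_0_iff Suc_le_eq)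
  moreover have "card u + card w = card (u \<union> w) + card (u \<inter> w)" using card_Un_Int[OF fu] .
  ultimately have "card (u \<union> w) \<le> 3" using assms by (simp add: V_mem)
  then have "card X = 2" using union_ge3[OF assms(1,2,3)] compl_card[OF assms(1,2)] X_def by simp
  then have "X \<in> petersen_V" by (simp add: V_mem X_def)
  moreover have "petersen_adj u X" "petersen_adj X w" by (auto simp: petersen_adj_def X_def)
  ultimately show ?thesis by blast
qed

lemma P3:
  assumes "v \<in> petersen_V"
  shows "\<exists>x\<in>petersen_V. \<exists>y\<in>petersen_V. \<exists>z\<in>petersen_V. x \<noteq> y \<and> x \<noteq> z \<and> y \<noteq> z \<and>
     petersen_adj v x \<and> petersen_adj v y \<and> petersen_adj v z \<and>
     (\<forall>w\<in>petersen_V. petersen_adj v w \<longrightarrow> w = x \<or> w = y \<or> w = z)"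
proof -
  define X where "X = {1..5::nat} - v"
  have vs: "v \<subseteq> {1..5}" "card v = 2" using assms by (simp_all add: V_mem)
  have "card X = card {1..5::nat} - card v" unfolding X_def
    by (rule card_Diff_subset[OF finite_subset[OF vs(1)] vs(1)]) simp
  then have "card X = 3" using vs by simp
  then obtain p q r where X: "X = {p,q,r}" "p \<noteq> q" "q \<noteq> r" "p \<noteq> r" unfolding card_3_iff by blast
  have sub: "{p,q,r} \<subseteq> {1..5}" "v \<inter> {p,q,r} = {}" using X by (auto simp: X_def)
  have inV: "{p,q} \<in> petersen_V" "{p,r} \<in> petersen_V" "{q,r} \<in> petersen_V"
    using sub X by (auto simp: V_mem)
  have adj: "petersen_adj v {p,q}" "petersen_adj v {p,r}" "petersen_adj v {q,r}"
    using sub by (auto simp: petersen_adj_def)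
  have dist: "{p,q} \<noteq> {p,r}" "{p,q} \<noteq> {q,r}" "{p,r} \<noteq> {q,r}"
    using X by (auto simp: doubleton_eq_iff)
  have rest: "w = {p,q} \<or> w = {p,r} \<or> w = {q,r}" if "w \<in> petersen_V" "petersen_adj v w" for w
  proof -
    from that obtain a b where w: "w = {a,b}" "a \<noteq> b" unfolding V_mem card_2_iff by blast
    have "w \<subseteq> X" using that by (auto simp: X_def V_mem petersen_adj_def)
    then have "a \<in> {p,q,r}" "b \<in> {p,q,r}" using w X by auto
    then show ?thesis using w(2) unfolding w(1) by (auto simp: doubleton_eq_iff)
  qed
  show ?thesis
    apply (rule bexI[OF _ inV(1)], rule bexI[OF _ inV(2)], rule bexI[OF _ inV(3)])
    using adj dist rest by (intro conjI ballI impI) auto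
qed



context group
begin

lemma cayley_sym: "cayley_adj G S a b \<Longrightarrow> cayley_adj G S b a"
  unfolding cayley_adj_def by blast

lemma cayley_shift:
  assumes "S \<subseteq> carrier G" "a \<in> carrier G" "b \<in> carrier G" "h \<in> carrier G" "cayley_adj G S a b"
  shows "cayley_adj G S (a \<otimes> h) (b \<otimes> h)"
proof -
  from assms(5) obtain s where s: "s \<in> S" "a = s \<otimes> b \<or> b = s \<otimes> a" unfolding cayley_adj_def by blast
  with assms(1) have sc: "s \<in> carrier G" by blast
  from s(2) have "a \<otimes> h = s \<otimes> (b \<otimes> h) \<or> b \<otimes> h = s \<otimes> (a \<otimes> h)"
    using sc assms(2-4) by (auto simp: m_assoc)
  with s(1) show ?thesis unfolding cayley_adj_def by blast
qed

lemma no_cayley: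
  assumes SG: "S \<subseteq> carrier G"
  and Q1: "\<And>x. x \<in> carrier G \<Longrightarrow> \<not> cayley_adj G S x x"
  and Q2: "\<And>x z. x \<in> carrier G \<Longrightarrow> z \<in> carrier G \<Longrightarrow> x \<noteq> z \<Longrightarrow> \<not> cayley_adj G S x z \<Longrightarrow>
            \<exists>c\<in>carrier G. cayley_adj G S x c \<and> cayley_adj G S c z"
  and Q4: "\<And>a b c d. a \<in> carrier G \<Longrightarrow> b \<in> carrier G \<Longrightarrow> c \<in> carrier G \<Longrightarrow> d \<in> carrier G \<Longrightarrow>
            a \<noteq> c \<Longrightarrow> cayley_adj G S a b \<Longrightarrow> cayley_adj G S b c \<Longrightarrow> cayley_adj G S c d \<Longrightarrow>
            cayley_adj G S d a \<Longrightarrow> b = d"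
  and Q3: "\<And>x. x \<in> carrier G \<Longrightarrow> \<exists>n1\<in>carrier G. \<exists>n2\<in>carrier G. \<exists>n3\<in>carrier G.
            n1 \<noteq> n2 \<and> n1 \<noteq> n3 \<and> n2 \<noteq> n3 \<and> cayley_adj G S x n1 \<and> cayley_adj G S x n2 \<and>
            cayley_adj G S x n3 \<and> (\<forall>w\<in>carrier G. cayley_adj G S x w \<longrightarrow> w = n1 \<or> w = n2 \<or> w = n3)"
  shows False
proof -
  let ?A = "cayley_adj G S"
  have shift: "?A (a \<otimes> h) (b \<otimes> h)" if "a \<in> carrier G" "b \<in> carrier G" "h \<in> carrier G" "?A a b" for a b h
    using cayley_shift[OF SG that] .
  have invnb: "?A \<one> (inv n)" if "n \<in> carrier G" "?A \<one> n" for n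
  proof -
    have "?A (\<one> \<otimes> inv n) (n \<otimes> inv n)" using shift[of \<one> n "inv n"] that by simp
    then show ?thesis using that by (simp add: cayley_sym)
  qed
  from Q3[OF one_closed] obtain n1 n2 n3 where
    nc: "n1 \<in> carrier G" "n2 \<in> carrier G" "n3 \<in> carrier G" and
    nd: "n1 \<noteq> n2" "n1 \<noteq> n3" "n2 \<noteq> n3" and
    na: "?A \<one> n1" "?A \<one> n2" "?A \<one> n3" and
    nall: "\<forall>w\<in>carrier G. ?A \<one> w \<longrightarrow> w = n1 \<or> w = n2 \<or> w = n3"
    by blast
  have ninv: "inv n \<in> {n1, n2, n3}" if "n \<in> carrier G" "?A \<one> n" for n
    using nall invnb[OF that] that(1) by auto
  have nne: "n \<noteq> \<one>" if "?A \<one> n" for n using Q1[OF one_closed] that by auto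
  have "\<exists>t\<in>carrier G. t \<noteq> \<one> \<and> inv t = t"
  proof (rule ccontr)
    assume no: "\<not> ?thesis"
    have i1: "inv n1 = n2 \<or> inv n1 = n3" using ninv[OF nc(1) na(1)] no nc(1) nne[OF na(1)] by auto
    have i2: "inv n2 = n1 \<or> inv n2 = n3" using ninv[OF nc(2) na(2)] no nc(2) nne[OF na(2)] by auto
    have i3: "inv n3 = n1 \<or> inv n3 = n2" using ninv[OF nc(3) na(3)] no nc(3) nne[OF na(3)] by auto
    have ii: "inv (inv n1) = n1" "inv (inv n2) = n2" "inv (inv n3) = n3" using nc by simp_all
    show False using i1 i2 i3 ii nd by metis
  qed
  then obtain t where tc: "t \<in> carrier G" and t1: "t \<noteq> \<one>" and ti: "inv t = t" by blast
  have tt: "x \<otimes> t \<otimes> t = x" if "x \<in> carrier G" for x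
  proof -
    have "x \<otimes> t \<otimes> t = x \<otimes> (t \<otimes> inv t)" using that tc ti by (simp add: m_assoc)
    then show ?thesis using that tc by simp
  qed
  have fp: "x \<otimes> t \<noteq> x" if "x \<in> carrier G" for x
  proof
    assume "x \<otimes> t = x"
    then have "t = \<one>" using that tc by simp
    with t1 show False by simp
  qed
  have claim: "?A x (x \<otimes> t)" if xc: "x \<in> carrier G" for x
  proof (rule ccontr)
    assume na: "\<not> ?A x (x \<otimes> t)"
    obtain c where cc: "c \<in> carrier G" and c1: "?A x c" and c2: "?A c (x \<otimes> t)"
      using Q2[OF xc m_closed[OF xc tc] fp[OF xc, symmetric] na] by blast
    have c3: "?A (x \<otimes> t) (c \<otimes> t)" using shift[OF xc cc tc c1] .
    have "?A (c \<otimes> t) (x \<otimes> t \<otimes> t)" using shift[OF cc m_closed[OF xc tc] tc c2] .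
    then have c4: "?A (c \<otimes> t) x" using tt[OF xc] by simp
    have "c = c \<otimes> t"
      using Q4[OF xc cc m_closed[OF xc tc] m_closed[OF cc tc] fp[OF xc, symmetric] c1 c2 c3 c4] .
    with fp[OF cc] show False by simp
  qed
  obtain y where yc: "y \<in> carrier G" and ya: "?A \<one> y" and yt: "y \<noteq> t"
    using nc na nd by metis
  have a1: "?A y (y \<otimes> t)" using claim[OF yc] .
  have "?A (y \<otimes> t) (\<one> \<otimes> t)" using shift[OF yc one_closed tc cayley_sym[OF ya]] .
  then have a2: "?A (y \<otimes> t) t" using tc by simp
  have a3: "?A t \<one>" using cayley_sym[OF claim[OF one_closed]] tc by simp
  have ne: "\<one> \<noteq> y \<otimes> t"
  proof
    assume "\<one> = y \<otimes> t"
    then have "\<one> \<otimes> t = y \<otimes> t \<otimes> t" by simp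
    then have "t = y" using tt[OF yc] tc by simp
    with yt show False by simp
  qed
  have "y = t" using Q4[OF one_closed yc m_closed[OF yc tc] tc ne ya a1 a2 a3] .
  with yt show False by simp
qed

end



lemma transfer_contra:
  assumes grp: "group G" and SG: "S \<subseteq> carrier G"
    and iso: "graph_iso petersen_V petersen_adj (carrier G) (cayley_adj G S)"
  shows False
proof -
  let ?A = "cayley_adj G S" and ?V = petersen_V and ?W = "carrier G"
  from iso obtain f where bij: "bij_betw f ?V ?W"
    and fi: "\<forall>u\<in>?V. \<forall>v\<in>?V. petersen_adj u v \<longleftrightarrow> ?A (f u) (f v)"
    unfolding graph_iso_def by blast
  have sur: "\<exists>u\<in>?V. x = f u" if "x \<in> ?W" for x
    using bij that unfolding bij_betw_def by blast
  have into: "f u \<in> ?W" if "u \<in> ?V" for u using bij that bij_betwE by blast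
  have inj: "u = v" if "u \<in> ?V" "v \<in> ?V" "f u = f v" for u v
    using bij that unfolding bij_betw_def inj_on_def by blast
  have A: "?A (f u) (f v) \<longleftrightarrow> petersen_adj u v" if "u \<in> ?V" "v \<in> ?V" for u v
    using fi that by blast
  show False
  proof (rule group.no_cayley[OF grp SG])
    fix x assume "x \<in> ?W"
    then obtain u where u: "u \<in> ?V" "x = f u" using sur by blast
    then show "\<not> ?A x x" using A P1 by simp
  next
    fix x z assume "x \<in> ?W" "z \<in> ?W" "x \<noteq> z" "\<not> ?A x z"
    moreover obtain u where u: "u \<in> ?V" "x = f u" using sur \<open>x \<in> ?W\<close> by blast
    moreover obtain w where w: "w \<in> ?V" "z = f w" using sur \<open>z \<in> ?W\<close> by blast
    ultimately have "u \<noteq> w" "\<not> petersen_adj u w" using A by auto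
    then obtain c where "c \<in> ?V" "petersen_adj u c" "petersen_adj c w" using P2 u w by blast
    then show "\<exists>c\<in>?W. ?A x c \<and> ?A c z" using A into u w by blast
  next
    fix a b c d assume h: "a \<in> ?W" "b \<in> ?W" "c \<in> ?W" "d \<in> ?W" "a \<noteq> c" "?A a b" "?A b c" "?A c d" "?A d a"
    obtain a' where a: "a' \<in> ?V" "a = f a'" using sur h(1) by blast
    obtain b' where b: "b' \<in> ?V" "b = f b'" using sur h(2) by blast
    obtain c' where c: "c' \<in> ?V" "c = f c'" using sur h(3) by blast
    obtain d' where d: "d' \<in> ?V" "d = f d'" using sur h(4) by blast
    have "b' = d'" using P4[OF a(1) b(1) c(1) d(1)] h a b c d A by auto
    then show "b = d" using b d by simp
  next
    fix x assume "x \<in> ?W"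
    then obtain v where v: "v \<in> ?V" "x = f v" using sur by blast
    from P3[OF v(1)] obtain p q r where pqr: "p \<in> ?V" "q \<in> ?V" "r \<in> ?V" "p \<noteq> q" "p \<noteq> r" "q \<noteq> r"
      "petersen_adj v p" "petersen_adj v q" "petersen_adj v r"
      and all: "\<forall>w\<in>?V. petersen_adj v w \<longrightarrow> w = p \<or> w = q \<or> w = r" by blast
    have d: "f p \<noteq> f q" "f p \<noteq> f r" "f q \<noteq> f r" using inj pqr by blast+
    have ad: "?A x (f p)" "?A x (f q)" "?A x (f r)" using A v pqr by auto
    have "\<forall>w\<in>?W. ?A x w \<longrightarrow> w = f p \<or> w = f q \<or> w = f r"
    proof (intro ballI impI)
      fix w assume "w \<in> ?W" "?A x w"
      then obtain w' where "w' \<in> ?V" "w = f w'" using sur by blast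
      then show "w = f p \<or> w = f q \<or> w = f r" using all A v \<open>?A x w\<close> by auto
    qed
    then show "\<exists>n1\<in>?W. \<exists>n2\<in>?W. \<exists>n3\<in>?W. n1 \<noteq> n2 \<and> n1 \<noteq> n3 \<and> n2 \<noteq> n3 \<and> ?A x n1 \<and> ?A x n2 \<and>
            ?A x n3 \<and> (\<forall>w\<in>?W. ?A x w \<longrightarrow> w = n1 \<or> w = n2 \<or> w = n3)"
      using into pqr d ad by blast
  qed
qed


theorem mainTheorem3:
  shows "uniformly_vertex_transitive petersen_V petersen_adj \<and>
    \<not> (\<exists>(G :: 'g monoid) S. group G \<and> finite (carrier G) \<and> S \<subseteq> carrier G \<and>
          graph_iso petersen_V petersen_adj (carrier G) (cayley_adj G S))"
proof (intro conjI notI)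
  show "uniformly_vertex_transitive petersen_V petersen_adj" by (rule part1)
next
  assume "\<exists>(G :: 'g monoid) S. group G \<and> finite (carrier G) \<and> S \<subseteq> carrier G \<and>
          graph_iso petersen_V petersen_adj (carrier G) (cayley_adj G S)"
  then obtain G :: "'g monoid" and S where "group G" "S \<subseteq> carrier G"
    "graph_iso petersen_V petersen_adj (carrier G) (cayley_adj G S)" by blast
  then show False by (rule transfer_contra)
qed

end
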